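(* Let $z\in\mathcal N_h^I$ and $w_h,v_h\in\mathbb V_h$. If $(w_h-v_h)(z)\ge(w_h-v_h)(z')$ for all $z'\in\widetilde{\mathcal N}_{\mathfrak h}(z)$, then $$S^+_{\mathfrak h}w_h(z)\le S^+_{\mathfrak h}v_h(z),\qquad S^-_{\mathfrak h}w_h(z)\ge S^-_{\mathfrak h}v_h(z),$$ and $-\Delta^\diamond_{\infty,\mathfrak h}w_h(z)\ge-\Delta^\diamond_{\infty,\mathfrak h}v_h(z)$.
   Context: Setting: $\Omega\subset\mathbb R^d$ ($d\ge1$) is a bounded domain with continuous boundary. For $r>0$, $\Omega^{(r)}=\{x\in\Omega:\operatorname{dist}(x,\partial\Omega)>r\}$. $\mathcal T_h$ is a mesh of closed simplices, $h=\max_T\operatorname{diam}T$, $\Omega_h$ the interior of the union of the simplices, with $\Omega^{(h)}\subset\Omega_h\subset\Omega$; $\mathcal N_h$ the set of vertices. $\mathbb V_h$: continuous piecewise linear functions on $\mathcal T_h$ with hat basis $\{\hat\varphi_z\}_{z\in\mathcal N_h}$ ($\hat\varphi_z(z')=\delta_{zz'}$), and $\mathcal I_h$ the Lagrange interpolant. Parameters $\mathfrak h=(h,\varepsilon,\theta)$, $\varepsilon\in[h,\operatorname{diam}\Omega]$, $0<\theta\le1$. $\mathcal N_h^I=\mathcal N_h\cap\Omega^{(2\varepsilon)}$. $\mathbb S_\theta$: finite symmetric subset of the unit sphere $\mathbb S$ such that each $v\in\mathbb S$ has $v_\theta\in\mathbb S_\theta$ with $|v-v_\theta|\le\theta$.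 For $z\in\mathcal N_h^I$: $\mathcal N_{\mathfrak h}(z)=\{z\}\cup\{z+\varepsilon v_\theta:v_\theta\in\mathbb S_\theta\}$; for $w\in C(\overline\Omega)$, $S^+_{\mathfrak h}w(z)=\varepsilon^{-1}(\max_{x\in\mathcal N_{\mathfrak h}(z)}w(x)-w(z))$, $S^-_{\mathfrak h}w(z)=\varepsilon^{-1}(w(z)-\min_{x\in\mathcal N_{\mathfrak h}(z)}w(x))$, $-\Delta^\diamond_{\infty,\mathfrak h}w(z)=-\varepsilon^{-1}(S^+_{\mathfrak h}\mathcal I_hw(z)-S^-_{\mathfrak h}\mathcal I_hw(z))$; and $\widetilde{\mathcal N}_{\mathfrak h}(z)=\{z\}\cup\{z'\in\mathcal N_h:\exists v_\theta\in\mathbb S_\theta,\ \hat\varphi_{z'}(z+\varepsilon v_\theta)>0\}$. *)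

theory Defs
  imports "HOL-Analysis.Analysis"
begin

definition continuous_boundary :: "'a::euclidean_space set \<Rightarrow> bool" where
  "continuous_boundary \<Omega> \<longleftrightarrow>
     (\<forall>x\<in>frontier \<Omega>. \<exists>r>0. \<exists>n g. norm n = 1 \<and> continuous_on UNIV (g :: 'a \<Rightarrow> real) \<and>
        \<Omega> \<inter> ball x r = {y\<in>ball x r. y \<bullet> n > g (y - (y \<bullet> n) *\<^sub>R n)})"

definition bounded_domain_cb :: "'a::euclidean_space set \<Rightarrow> bool" where
  "bounded_domain_cb \<Omega> \<longleftrightarrow> open \<Omega> \<and> connected \<Omega> \<and> \<Omega> \<noteq> {} \<and> bounded \<Omega> \<and> continuous_boundary \<Omega>"

definition inner_layer :: "'a::euclidean_space set \<Rightarrow> real \<Rightarrow> 'a set" where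
  "inner_layer \<Omega> r = {x\<in>\<Omega>. infdist x (frontier \<Omega>) > r}"

definition simplicial_mesh :: "'a::euclidean_space set set \<Rightarrow> bool" where
  "simplicial_mesh \<T> \<longleftrightarrow> finite \<T> \<and> \<T> \<noteq> {} \<and>
     (\<forall>T\<in>\<T>. int DIM('a) simplex T) \<and>
     (\<forall>T\<in>\<T>. \<forall>T'\<in>\<T>. (T \<inter> T') face_of T \<and> (T \<inter> T') face_of T')"

definition mesh_size :: "'a::euclidean_space set set \<Rightarrow> real" where
  "mesh_size \<T> = Max (diameter ` \<T>)"

definition mesh_domain :: "'a::euclidean_space set set \<Rightarrow> 'a set" where
  "mesh_domain \<T> = interior (\<Union>\<T>)"

definition nodes :: "'a::euclidean_space set set \<Rightarrow> 'a set" where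
  "nodes \<T> = {x. \<exists>T\<in>\<T>. x extreme_point_of T}"

text \<open>Continuous piecewise linear functions (only values on the closed mesh matter).\<close>
definition Vh :: "'a::euclidean_space set set \<Rightarrow> ('a \<Rightarrow> real) set" where
  "Vh \<T> = {f. continuous_on (\<Union>\<T>) f \<and> (\<forall>T\<in>\<T>. \<exists>a c. \<forall>x\<in>T. f x = a \<bullet> x + c)}"

definition hat :: "'a::euclidean_space set set \<Rightarrow> 'a \<Rightarrow> 'a \<Rightarrow> real" where
  "hat \<T> z = (THE g. g \<in> Vh \<T> \<and> (\<forall>z'\<in>nodes \<T>. g z' = (if z' = z then 1 else 0)) \<and>
                     (\<forall>x. x \<notin> \<Union>\<T> \<longrightarrow> g x = 0))"

definition lagrange_interp :: "'a::euclidean_space set set \<Rightarrow> ('a \<Rightarrow> real) \<Rightarrow> 'a \<Rightarrow> real" where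
  "lagrange_interp \<T> w = (\<lambda>x. \<Sum>z\<in>nodes \<T>. w z * hat \<T> z x)"

definition theta_net :: "real \<Rightarrow> 'a::euclidean_space set \<Rightarrow> bool" where
  "theta_net \<theta> S \<longleftrightarrow> finite S \<and> S \<subseteq> sphere 0 1 \<and> (\<forall>v\<in>S. - v \<in> S) \<and>
     (\<forall>u\<in>sphere 0 1. \<exists>v\<in>S. norm (u - v) \<le> \<theta>)"

definition stencil :: "real \<Rightarrow> 'a::euclidean_space set \<Rightarrow> 'a \<Rightarrow> 'a set" where
  "stencil \<epsilon> S z = insert z ((\<lambda>v. z + \<epsilon> *\<^sub>R v) ` S)"

definition Splus :: "real \<Rightarrow> 'a::euclidean_space set \<Rightarrow> ('a \<Rightarrow> real) \<Rightarrow> 'a \<Rightarrow> real" where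
  "Splus \<epsilon> S w z = (Max (w ` stencil \<epsilon> S z) - w z) / \<epsilon>"

definition Sminus :: "real \<Rightarrow> 'a::euclidean_space set \<Rightarrow> ('a \<Rightarrow> real) \<Rightarrow> 'a \<Rightarrow> real" where
  "Sminus \<epsilon> S w z = (w z - Min (w ` stencil \<epsilon> S z)) / \<epsilon>"

definition neg_disc_inf_lap :: "'a::euclidean_space set set \<Rightarrow> real \<Rightarrow> 'a set \<Rightarrow> ('a \<Rightarrow> real) \<Rightarrow> 'a \<Rightarrow> real" where
  "neg_disc_inf_lap \<T> \<epsilon> S w z =
     - (Splus \<epsilon> S (lagrange_interp \<T> w) z - Sminus \<epsilon> S (lagrange_interp \<T> w) z) / \<epsilon>"

definition ext_stencil :: "'a::euclidean_space set set \<Rightarrow> real \<Rightarrow> 'a set \<Rightarrow> 'a \<Rightarrow> 'a set" where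
  "ext_stencil \<T> \<epsilon> S z = insert z {z'\<in>nodes \<T>. \<exists>v\<in>S. hat \<T> z' (z + \<epsilon> *\<^sub>R v) > 0}"

end

theory Submission
  imports Defs
begin


definition afff :: "('a::euclidean_space \<Rightarrow> real) \<Rightarrow> bool" where
  "afff f \<longleftrightarrow> (\<exists>p c. \<forall>x. f x = p \<bullet> x + c)"

lemma afff_const: "afff (\<lambda>x. c)"
  unfolding afff_def by (rule exI[of _ 0]) auto

lemma afff_diff: "afff f \<Longrightarrow> afff g \<Longrightarrow> afff (\<lambda>x. f x - g x)"
proof -
  assume "afff f" "afff g"
  then obtain p c q d where "\<forall>x. f x = p \<bullet> x + c" "\<forall>x. g x = q \<bullet> x + d"
    unfolding afff_def by blast
  then show ?thesis unfolding afff_def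
    by (intro exI[of _ "p - q"] exI[of _ "c - d"]) (simp add: inner_diff_left)
qed

lemma afff_sum: "finite A \<Longrightarrow> (\<And>i. i \<in> A \<Longrightarrow> afff (f i)) \<Longrightarrow> afff (\<lambda>x. \<Sum>i\<in>A. f i x)"
proof (induction A rule: finite_induct)
  case empty then show ?case by (simp add: afff_const)
next
  case (insert a A)
  then have "afff (f a)" "afff (\<lambda>x. \<Sum>i\<in>A. f i x)" by auto
  then obtain p c q d where "\<forall>x. f a x = p \<bullet> x + c" "\<forall>x. (\<Sum>i\<in>A. f i x) = q \<bullet> x + d"
    unfolding afff_def by blast
  then show ?case using insert unfolding afff_def
    by (intro exI[of _ "p + q"] exI[of _ "c + d"]) (simp add: inner_add_left)
qed

lemma afff_cont: "afff f \<Longrightarrow> continuous_on A f"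
proof -
  assume "afff f"
  then obtain p c where pc: "\<forall>x. f x = p \<bullet> x + c" unfolding afff_def by blast
  have "continuous_on A (\<lambda>x. p \<bullet> x + c)" by (intro continuous_intros)
  moreover have "f = (\<lambda>x. p \<bullet> x + c)" using pc by auto
  ultimately show ?thesis by simp
qed

lemma afff_comb:
  assumes "afff f" "finite C" "sum \<mu> C = 1"
  shows "f (\<Sum>b\<in>C. \<mu> b *\<^sub>R b) = (\<Sum>b\<in>C. \<mu> b * f b)"
proof -
  obtain p c where pc: "\<And>x. f x = p \<bullet> x + c" using assms(1) unfolding afff_def by blast
  have "f (\<Sum>b\<in>C. \<mu> b *\<^sub>R b) = (\<Sum>b\<in>C. \<mu> b * (p \<bullet> b)) + (\<Sum>b\<in>C. \<mu> b) * c"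
    by (simp only: pc inner_sum_right inner_scaleR_right assms(3))
  also have "\<dots> = (\<Sum>b\<in>C. \<mu> b * (p \<bullet> b) + \<mu> b * c)"
    by (simp only: sum.distrib sum_distrib_right)
  also have "\<dots> = (\<Sum>b\<in>C. \<mu> b * f b)"
    by (intro sum.cong refl) (simp add: pc distrib_left)
  finally show ?thesis .
qed

lemma bary_exists:
  fixes C :: "'a::euclidean_space set"
  assumes "finite C" "\<not> affine_dependent C"
  shows "\<exists>l. (\<forall>b\<in>C. afff (l b)) \<and> (\<forall>b\<in>C. \<forall>b'\<in>C. l b b' = (if b = b' then 1 else 0))"
proof (cases "C = {}")
  case True then show ?thesis by auto
next
  case False
  then obtain a0 where a0: "a0 \<in> C" by auto
  let ?B = "(\<lambda>x. -a0 + x) ` (C - {a0})"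
  have ind: "independent ?B" using affine_dependent_iff_dependent2[OF a0] assms(2) by simp
  have "\<forall>b\<in>C - {a0}. \<exists>g. linear g \<and> (\<forall>y\<in>?B. g y = (if y = -a0 + b then 1 else (0::real)))"
  proof
    fix b assume "b \<in> C - {a0}"
    show "\<exists>g. linear g \<and> (\<forall>y\<in>?B. g y = (if y = -a0 + b then 1 else (0::real)))"
      by (rule linear_independent_extend[OF ind, of "\<lambda>y. if y = -a0 + b then 1 else (0::real)"])
  qed
  from bchoice[OF this] obtain g where
    g: "\<forall>b\<in>C - {a0}. linear (g b) \<and> (\<forall>y\<in>?B. g b y = (if y = -a0 + b then 1 else (0::real)))"
    by blast
  have gaff: "afff (\<lambda>x. g b (x - a0))" if "b \<in> C - {a0}" for b
  proof -
    have lin: "linear (g b)" using g that by blast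
    have "g b (x - a0) = adjoint (g b) 1 \<bullet> x + (- (adjoint (g b) 1 \<bullet> a0))" for x
      using adjoint_clauses(2)[OF lin, of 1 "x - a0"] by (simp add: inner_diff_right)
    then show ?thesis unfolding afff_def by blast
  qed
  have gval: "g b (b' - a0) = (if b = b' then 1 else 0)" if "b \<in> C - {a0}" "b' \<in> C - {a0}" for b b'
  proof -
    have "-a0 + b' \<in> ?B" using that(2) by blast
    then have 1: "g b (-a0 + b') = (if -a0 + b' = -a0 + b then 1 else 0)" using g that(1) by blast
    have 2: "(-a0 + b' = -a0 + b) = (b = b')" by auto
    have 3: "b' - a0 = -a0 + b'" by simp
    show ?thesis unfolding 3 using 1 2 by simp
  qed
  have g0: "g b (a0 - a0) = 0" if "b \<in> C - {a0}" for b
  proof -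
    have "linear (g b)" using g that by blast
    then show ?thesis using linear_0 by simp
  qed
  define l where "l b x = (if b = a0 then 1 - (\<Sum>b'\<in>C - {a0}. g b' (x - a0)) else g b (x - a0))" for b x
  have "afff (l b)" if "b \<in> C" for b
  proof (cases "b = a0")
    case True
    have e: "l b = (\<lambda>x. 1 - (\<Sum>b'\<in>C - {a0}. g b' (x - a0)))" using True by (simp add: l_def fun_eq_iff)
    have "afff (\<lambda>x. 1 - (\<Sum>b'\<in>C - {a0}. g b' (x - a0)))"
      by (rule afff_diff[OF afff_const afff_sum]) (use assms(1) gaff in auto)
    then show ?thesis unfolding e .
  next
    case False
    have e: "l b = (\<lambda>x. g b (x - a0))" using False by (simp add: l_def fun_eq_iff)
    show ?thesis unfolding e using gaff that False by blast
  qed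
  moreover have "l b b' = (if b = b' then 1 else 0)" if "b \<in> C" "b' \<in> C" for b b'
  proof (cases "b = a0")
    case True
    show ?thesis
    proof (cases "b' = a0")
      case True then show ?thesis using \<open>b = a0\<close> g0 by (simp add: l_def)
    next
      case False
      have "(\<Sum>b''\<in>C - {a0}. g b'' (b' - a0)) = (\<Sum>b''\<in>C - {a0}. if b'' = b' then 1 else 0)"
        using gval that False by (intro sum.cong) auto
      also have "\<dots> = 1" using that False assms(1) by simp
      finally show ?thesis using True False by (simp add: l_def)
    qed
  next
    case False
    then have bC: "b \<in> C - {a0}" using that by blast
    have "l b b' = g b (b' - a0)" using False by (simp add: l_def)
    also have "\<dots> = (if b = b' then 1 else 0)"
    proof (cases "b' = a0")
      case True then show ?thesis using g0[OF bC] False by simp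
    next
      case False then show ?thesis using gval[OF bC] that by blast
    qed
    finally show ?thesis .
  qed
  ultimately show ?thesis by blast
qed

lemma bary_unique:
  assumes "\<forall>b\<in>C. afff (l b)" "\<forall>b\<in>C. \<forall>b'\<in>C. l b b' = (if b = b' then 1 else 0)"
    "finite C" "sum \<mu> C = 1" "b \<in> C"
  shows "l b (\<Sum>b\<in>C. \<mu> b *\<^sub>R b) = \<mu> b"
proof -
  have "l b (\<Sum>b\<in>C. \<mu> b *\<^sub>R b) = (\<Sum>b'\<in>C. \<mu> b' * l b b')"
    using afff_comb[of "l b" C \<mu>] assms by blast
  also have "\<dots> = (\<Sum>b'\<in>C. if b' = b then \<mu> b else 0)"
    using assms by (intro sum.cong) auto
  also have "\<dots> = \<mu> b" using assms by simp
  finally show ?thesis .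
qed


definition VT :: "'a::euclidean_space set \<Rightarrow> 'a set" where
  "VT T = {x. x extreme_point_of T}"

lemma simplex_VT:
  assumes "simplicial_mesh \<T>" "T \<in> \<T>"
  shows "finite (VT T) \<and> \<not> affine_dependent (VT T) \<and> T = convex hull (VT T)"
proof -
  have "int DIM('a) simplex T" using assms unfolding simplicial_mesh_def by blast
  then obtain C where C: "finite C" "\<not> affine_dependent C" "T = convex hull C"
    unfolding simplex by blast
  have "VT T = C" unfolding VT_def C(3)
    using extreme_point_of_convex_hull_affine_independent[OF C(2)] by blast
  then show ?thesis using C by simp
qed

definition lam :: "'a::euclidean_space set \<Rightarrow> 'a \<Rightarrow> 'a \<Rightarrow> real" where
  "lam T = (SOME l. (\<forall>b\<in>VT T. afff (l b)) \<and> (\<forall>b\<in>VT T. \<forall>b'\<in>VT T. l b b' = (if b = b' then 1 else 0)))"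

lemma lam_props:
  assumes "simplicial_mesh \<T>" "T \<in> \<T>"
  shows "(\<forall>b\<in>VT T. afff (lam T b)) \<and> (\<forall>b\<in>VT T. \<forall>b'\<in>VT T. lam T b b' = (if b = b' then 1 else 0))"
proof -
  have "\<exists>l. (\<forall>b\<in>VT T. afff (l b)) \<and> (\<forall>b\<in>VT T. \<forall>b'\<in>VT T. l b b' = (if b = b' then 1 else 0))"
    using bary_exists simplex_VT[OF assms] by blast
  then show ?thesis unfolding lam_def by (rule someI_ex)
qed

definition hatval :: "'a::euclidean_space set \<Rightarrow> 'a \<Rightarrow> 'a \<Rightarrow> real" where
  "hatval T z x = (if z \<in> VT T then lam T z x else 0)"

lemma hatval_afff:
  assumes "simplicial_mesh \<T>" "T \<in> \<T>"
  shows "afff (hatval T z)"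
proof -
  have e: "hatval T z = (if z \<in> VT T then lam T z else (\<lambda>x. 0))" by (auto simp: hatval_def fun_eq_iff)
  show ?thesis using lam_props[OF assms] unfolding e by (simp add: afff_const)
qed

lemma hatval_rep:
  assumes "simplicial_mesh \<T>" "T \<in> \<T>" "W \<subseteq> VT T" "sum \<mu> W = 1"
    "x = (\<Sum>b\<in>W. \<mu> b *\<^sub>R b)"
  shows "hatval T z x = (if z \<in> W then \<mu> z else 0)"
proof -
  have fin: "finite (VT T)" using simplex_VT[OF assms(1,2)] by blast
  define \<mu>' where "\<mu>' b = (if b \<in> W then \<mu> b else 0)" for b
  have "(\<Sum>b\<in>VT T. \<mu>' b *\<^sub>R b) = (\<Sum>b\<in>VT T. if b \<in> W then \<mu> b *\<^sub>R b else 0)"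
    unfolding \<mu>'_def by (intro sum.cong) auto
  also have "\<dots> = (\<Sum>b\<in>VT T \<inter> W. \<mu> b *\<^sub>R b)"
    by (simp add: sum.inter_restrict[OF fin])
  also have "VT T \<inter> W = W" using assms(3) by blast
  finally have xe: "x = (\<Sum>b\<in>VT T. \<mu>' b *\<^sub>R b)" using assms(5) by simp
  have "sum \<mu>' (VT T) = (\<Sum>b\<in>VT T. if b \<in> W then \<mu> b else 0)"
    unfolding \<mu>'_def by simp
  also have "\<dots> = sum \<mu> (VT T \<inter> W)"
    by (simp add: sum.inter_restrict[OF fin])
  also have "VT T \<inter> W = W" using assms(3) by blast
  finally have s1: "sum \<mu>' (VT T) = 1" using assms(4) by simp
  show ?thesis
  proof (cases "z \<in> VT T")
    case True
    have "lam T z x = \<mu>' z"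
      unfolding xe using bary_unique[of "VT T" "lam T" \<mu>' z] lam_props[OF assms(1,2)] fin s1 True
      by blast
    then show ?thesis using True by (simp add: hatval_def \<mu>'_def)
  next
    case False
    then show ?thesis using assms(3) by (auto simp: hatval_def)
  qed
qed

lemma hatval_consistent:
  assumes "simplicial_mesh \<T>" "T \<in> \<T>" "T' \<in> \<T>" "x \<in> T" "x \<in> T'"
  shows "hatval T z x = hatval T' z x"
proof -
  let ?F = "T \<inter> T'"
  have f1: "?F face_of T" and f2: "?F face_of T'" using assms unfolding simplicial_mesh_def by blast+
  have s1: "finite (VT T)" "\<not> affine_dependent (VT T)" "T = convex hull (VT T)"
    using simplex_VT[OF assms(1,2)] by blast+
  have s2: "finite (VT T')" "\<not> affine_dependent (VT T')" "T' = convex hull (VT T')"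
    using simplex_VT[OF assms(1,3)] by blast+
  have "?F face_of convex hull (VT T)" using f1 s1(3) by simp
  then obtain W where W: "W \<subseteq> VT T" "?F = convex hull W"
    using face_of_convex_hull_affine_independent[OF s1(2)] by blast
  have "?F face_of convex hull (VT T')" using f2 s2(3) by simp
  then obtain W' where W': "W' \<subseteq> VT T'" "?F = convex hull W'"
    using face_of_convex_hull_affine_independent[OF s2(2)] by blast
  have iW: "\<not> affine_dependent W" using W(1) s1(2) affine_dependent_subset by blast
  have iW': "\<not> affine_dependent W'" using W'(1) s2(2) affine_dependent_subset by blast
  have e1: "W = {y. y extreme_point_of ?F}"
    unfolding W(2) using extreme_point_of_convex_hull_affine_independent[OF iW] by simp
  have e2: "W' = {y. y extreme_point_of ?F}"
    unfolding W'(2) using extreme_point_of_convex_hull_affine_independent[OF iW'] by simp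
  have "W = W'" using e1 e2 by simp
  have finW: "finite W" using W(1) s1(1) finite_subset by blast
  have "x \<in> convex hull W" using assms(4,5) W(2) by blast
  then obtain \<mu> where mu: "sum \<mu> W = 1" "x = (\<Sum>b\<in>W. \<mu> b *\<^sub>R b)"
    unfolding convex_hull_finite[OF finW] by blast
  have a: "hatval T z x = (if z \<in> W then \<mu> z else 0)" by (rule hatval_rep[OF assms(1,2) W(1) mu])
  have mu': "sum \<mu> W' = 1" "x = (\<Sum>b\<in>W'. \<mu> b *\<^sub>R b)" using mu \<open>W = W'\<close> by simp_all
  have b: "hatval T' z x = (if z \<in> W' then \<mu> z else 0)" by (rule hatval_rep[OF assms(1,3) W'(1) mu'])
  show ?thesis using a b \<open>W = W'\<close> by simp
qed

lemma bary_repr: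
  assumes "simplicial_mesh \<T>" "T \<in> \<T>" "x \<in> T"
  shows "(\<forall>b\<in>VT T. lam T b x \<ge> 0) \<and> sum (\<lambda>b. lam T b x) (VT T) = 1 \<and>
         x = (\<Sum>b\<in>VT T. lam T b x *\<^sub>R b)"
proof -
  have s1: "finite (VT T)" "\<not> affine_dependent (VT T)" "T = convex hull (VT T)"
    using simplex_VT[OF assms(1,2)] by blast+
  have "x \<in> convex hull (VT T)" using assms(3) s1(3) by simp
  then obtain \<mu> where mu: "\<forall>b\<in>VT T. 0 \<le> \<mu> b" "sum \<mu> (VT T) = 1" "x = (\<Sum>b\<in>VT T. \<mu> b *\<^sub>R b)"
    unfolding convex_hull_finite[OF s1(1)] by blast
  have lp: "\<forall>b\<in>VT T. afff (lam T b)" "\<forall>b\<in>VT T. \<forall>b'\<in>VT T. lam T b b' = (if b = b' then 1 else 0)"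
    using lam_props[OF assms(1,2)] by blast+
  have eq: "lam T b x = \<mu> b" if b: "b \<in> VT T" for b
  proof -
    have "lam T b (\<Sum>b\<in>VT T. \<mu> b *\<^sub>R b) = \<mu> b"
      by (rule bary_unique[OF lp s1(1) mu(2) b])
    then show ?thesis using mu(3)[symmetric] by simp
  qed
  have r1: "\<forall>b\<in>VT T. lam T b x \<ge> 0" using eq mu(1) by simp
  have r2: "sum (\<lambda>b. lam T b x) (VT T) = 1" using eq mu(2) by (simp cong: sum.cong)
  have "(\<Sum>b\<in>VT T. lam T b x *\<^sub>R b) = (\<Sum>b\<in>VT T. \<mu> b *\<^sub>R b)"
    using eq by (intro sum.cong) simp_all
  then have r3: "x = (\<Sum>b\<in>VT T. lam T b x *\<^sub>R b)" using mu(3) by (simp only:)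
  show ?thesis using r1 r2 r3 by blast
qed

lemma affine_on_T:
  assumes "simplicial_mesh \<T>" "T \<in> \<T>" "\<forall>y\<in>T. u y = a \<bullet> y + c" "x \<in> T"
  shows "u x = (\<Sum>b\<in>VT T. lam T b x * u b)"
proof -
  have s1: "finite (VT T)" "\<not> affine_dependent (VT T)" "T = convex hull (VT T)"
    using simplex_VT[OF assms(1,2)] by blast+
  have br: "sum (\<lambda>b. lam T b x) (VT T) = 1" "x = (\<Sum>b\<in>VT T. lam T b x *\<^sub>R b)"
    using bary_repr[OF assms(1,2,4)] by blast+
  have af: "afff (\<lambda>y. a \<bullet> y + c)" unfolding afff_def by blast
  have "u x = a \<bullet> x + c" using assms(3,4) by blast
  also have "\<dots> = (\<Sum>b\<in>VT T. lam T b x * (a \<bullet> b + c))"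
  proof -
    have e: "a \<bullet> (\<Sum>b\<in>VT T. lam T b x *\<^sub>R b) + c = (\<Sum>b\<in>VT T. lam T b x * (a \<bullet> b + c))"
      using afff_comb[OF af s1(1) br(1)] by (simp only:)
    show ?thesis using e by (simp only: br(2)[symmetric])
  qed
  also have "\<dots> = (\<Sum>b\<in>VT T. lam T b x * u b)"
  proof (intro sum.cong refl)
    fix b assume "b \<in> VT T"
    then have "b \<in> convex hull (VT T)" by (rule hull_inc)
    then have "b \<in> T" using s1(3) by simp
    then show "lam T b x * (a \<bullet> b + c) = lam T b x * u b" using assms(3) by simp
  qed
  finally show ?thesis .
qed

definition G :: "'a::euclidean_space set set \<Rightarrow> 'a \<Rightarrow> 'a \<Rightarrow> real" where
  "G \<T> z x = (if \<exists>T\<in>\<T>. x \<in> T then hatval (SOME T. T \<in> \<T> \<and> x \<in> T) z x else 0)"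

lemma G_eq:
  assumes "simplicial_mesh \<T>" "T \<in> \<T>" "x \<in> T"
  shows "G \<T> z x = hatval T z x"
proof -
  have ex: "\<exists>T. T \<in> \<T> \<and> x \<in> T" using assms by blast
  define T0 where "T0 = (SOME T. T \<in> \<T> \<and> x \<in> T)"
  have T0: "T0 \<in> \<T> \<and> x \<in> T0"
    unfolding T0_def using someI_ex[OF ex] .
  have "\<exists>T\<in>\<T>. x \<in> T" using ex by blast
  then have "G \<T> z x = hatval T0 z x" unfolding G_def T0_def by simp
  also have "\<dots> = hatval T z x" using hatval_consistent[OF assms(1), of T0 T x z] T0 assms(2,3) by blast
  finally show ?thesis .
qed

lemma VT_sub: "VT T \<subseteq> T"
  unfolding VT_def extreme_point_of_def by blast

lemma nodes_eq: "nodes \<T> = \<Union> (VT ` \<T>)"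
  unfolding nodes_def VT_def by blast

lemma finite_nodes: "simplicial_mesh \<T> \<Longrightarrow> finite (nodes \<T>)"
  unfolding nodes_eq using simplex_VT simplicial_mesh_def by blast

lemma G_in_Vh:
  assumes "simplicial_mesh \<T>"
  shows "G \<T> z \<in> Vh \<T>"
proof -
  have fin: "finite \<T>" using assms simplicial_mesh_def by blast
  have "continuous_on (\<Union>T\<in>\<T>. T) (G \<T> z)"
  proof (rule continuous_on_closed_Union[OF fin])
    fix T assume T: "T \<in> \<T>"
    show "closed T" using T assms closed_simplex unfolding simplicial_mesh_def by blast
    have "continuous_on T (hatval T z)" using afff_cont hatval_afff[OF assms T] by blast
    moreover have "continuous_on T (G \<T> z) = continuous_on T (hatval T z)"
      by (rule continuous_on_cong) (auto simp: G_eq[OF assms T])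
    ultimately show "continuous_on T (G \<T> z)" by simp
  qed
  moreover have "\<exists>a c. \<forall>x\<in>T. G \<T> z x = a \<bullet> x + c" if T: "T \<in> \<T>" for T
  proof -
    obtain p c where "\<forall>x. hatval T z x = p \<bullet> x + c" using hatval_afff[OF assms T] afff_def by blast
    then have "\<forall>x\<in>T. G \<T> z x = p \<bullet> x + c" using G_eq[OF assms T] by simp
    then show ?thesis by blast
  qed
  ultimately show ?thesis unfolding Vh_def by simp
qed

lemma G_nodes:
  assumes "simplicial_mesh \<T>" "z' \<in> nodes \<T>"
  shows "G \<T> z z' = (if z' = z then 1 else 0)"
proof -
  obtain T where T: "T \<in> \<T>" "z' \<in> VT T" using assms(2) nodes_eq by blast
  have "G \<T> z z' = hatval T z z'" using G_eq[OF assms(1) T(1)] T(2) VT_sub by blast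
  then show ?thesis using lam_props[OF assms(1) T(1)] T(2) by (auto simp: hatval_def)
qed

lemma G_outside: "x \<notin> \<Union>\<T> \<Longrightarrow> G \<T> z x = 0"
  unfolding G_def by auto

lemma Vh_unique:
  assumes "simplicial_mesh \<T>" "g \<in> Vh \<T>" "\<forall>z'\<in>nodes \<T>. g z' = (if z' = z then 1 else 0)"
    "\<forall>x. x \<notin> \<Union>\<T> \<longrightarrow> g x = 0"
  shows "g = G \<T> z"
proof
  fix x
  show "g x = G \<T> z x"
  proof (cases "x \<in> \<Union>\<T>")
    case False then show ?thesis using assms(4) G_outside[OF False] by simp
  next
    case True
    then obtain T where T: "T \<in> \<T>" "x \<in> T" by blast
    obtain a c where ac: "\<forall>y\<in>T. g y = a \<bullet> y + c" using assms(2) T(1) unfolding Vh_def by blast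
    have sub: "VT T \<subseteq> nodes \<T>" using T(1) nodes_eq by blast
    have fin: "finite (VT T)" using simplex_VT[OF assms(1) T(1)] by blast
    have "g x = (\<Sum>b\<in>VT T. lam T b x * g b)" using affine_on_T[OF assms(1) T(1) ac T(2)] .
    also have "\<dots> = (\<Sum>b\<in>VT T. if b = z then lam T z x else 0)"
      using sub assms(3) by (intro sum.cong) auto
    also have "\<dots> = hatval T z x" using fin by (simp add: hatval_def)
    also have "\<dots> = G \<T> z x" using G_eq[OF assms(1) T] by simp
    finally show ?thesis .
  qed
qed

lemma hat_on_T:
  assumes "simplicial_mesh \<T>" "T \<in> \<T>" "x \<in> T"
  shows "hat \<T> z x = hatval T z x"
proof -
  have "hat \<T> z = G \<T> z"
    unfolding hat_def
  proof (rule the_equality)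
    show "G \<T> z \<in> Vh \<T> \<and> (\<forall>z'\<in>nodes \<T>. G \<T> z z' = (if z' = z then 1 else 0)) \<and>
          (\<forall>x. x \<notin> \<Union> \<T> \<longrightarrow> G \<T> z x = 0)"
      using G_in_Vh[OF assms(1)] G_nodes[OF assms(1)] G_outside by blast
  next
    fix g assume "g \<in> Vh \<T> \<and> (\<forall>z'\<in>nodes \<T>. g z' = (if z' = z then 1 else 0)) \<and>
          (\<forall>x. x \<notin> \<Union> \<T> \<longrightarrow> g x = 0)"
    then show "g = G \<T> z" using Vh_unique[OF assms(1)] by blast
  qed
  then show ?thesis using G_eq[OF assms] by simp
qed

lemma lagrange_eq:
  assumes "simplicial_mesh \<T>" "w \<in> Vh \<T>" "x \<in> \<Union>\<T>"
  shows "lagrange_interp \<T> w x = w x"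
proof -
  obtain T where T: "T \<in> \<T>" "x \<in> T" using assms(3) by blast
  obtain a c where ac: "\<forall>y\<in>T. w y = a \<bullet> y + c" using assms(2) T(1) unfolding Vh_def by blast
  have sub: "VT T \<subseteq> nodes \<T>" using T(1) nodes_eq by blast
  have "lagrange_interp \<T> w x = (\<Sum>b\<in>nodes \<T>. w b * hatval T b x)"
    unfolding lagrange_interp_def using hat_on_T[OF assms(1) T] by simp
  also have "\<dots> = (\<Sum>b\<in>VT T. w b * hatval T b x)"
    using sub finite_nodes[OF assms(1)] by (intro sum.mono_neutral_right) (auto simp: hatval_def)
  also have "\<dots> = (\<Sum>b\<in>VT T. lam T b x * w b)"
    by (intro sum.cong) (auto simp: hatval_def)
  also have "\<dots> = w x" using affine_on_T[OF assms(1) T(1) ac T(2)] by simp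
  finally show ?thesis .
qed

lemma key_ineq:
  assumes "simplicial_mesh \<T>" "w \<in> Vh \<T>" "v \<in> Vh \<T>"
    "\<forall>z'\<in>ext_stencil \<T> \<epsilon> S z. (w - v) z \<ge> (w - v) z'"
    "s \<in> S" "z + \<epsilon> *\<^sub>R s \<in> \<Union>\<T>"
  shows "w (z + \<epsilon> *\<^sub>R s) - v (z + \<epsilon> *\<^sub>R s) \<le> w z - v z"
proof -
  let ?y = "z + \<epsilon> *\<^sub>R s"
  obtain T where T: "T \<in> \<T>" "?y \<in> T" using assms(6) by blast
  obtain a1 c1 where ac1: "\<forall>y\<in>T. w y = a1 \<bullet> y + c1" using assms(2) T(1) unfolding Vh_def by blast
  obtain a2 c2 where ac2: "\<forall>y\<in>T. v y = a2 \<bullet> y + c2" using assms(3) T(1) unfolding Vh_def by blast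
  have acu: "\<forall>y\<in>T. (w y - v y) = (a1 - a2) \<bullet> y + (c1 - c2)" using ac1 ac2 by (simp add: inner_diff_left)
  have sub: "VT T \<subseteq> nodes \<T>" using T(1) nodes_eq by blast
  have br: "\<forall>b\<in>VT T. lam T b ?y \<ge> 0" "sum (\<lambda>b. lam T b ?y) (VT T) = 1"
    using bary_repr[OF assms(1) T] by blast+
  have "w ?y - v ?y = (\<Sum>b\<in>VT T. lam T b ?y * (w b - v b))"
    using affine_on_T[OF assms(1) T(1) acu T(2)] .
  also have "\<dots> \<le> (\<Sum>b\<in>VT T. lam T b ?y * (w z - v z))"
  proof (rule sum_mono)
    fix b assume b: "b \<in> VT T"
    show "lam T b ?y * (w b - v b) \<le> lam T b ?y * (w z - v z)"
    proof (cases "lam T b ?y > 0")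
      case True
      have "hat \<T> b ?y > 0" using hat_on_T[OF assms(1) T] True b by (simp add: hatval_def)
      then have "b \<in> ext_stencil \<T> \<epsilon> S z" unfolding ext_stencil_def using sub b assms(5) by blast
      then have "w b - v b \<le> w z - v z" using assms(4) by auto
      then show ?thesis using True by (simp add: mult_left_mono)
    next
      case False
      then have "lam T b ?y = 0" using br b by force
      then show ?thesis by simp
    qed
  qed
  also have "\<dots> = w z - v z" using br(2) by (simp add: sum_distrib_right[symmetric])
  finally show ?thesis .
qed

lemma stencil_in_mesh:
  assumes "inner_layer \<Omega> (mesh_size \<T>) \<subseteq> mesh_domain \<T>" "mesh_size \<T> \<le> \<epsilon>" "0 < \<epsilon>"
    "z \<in> inner_layer \<Omega> (2 * \<epsilon>)" "norm s = 1"
  shows "z + \<epsilon> *\<^sub>R s \<in> \<Union>\<T>"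
proof -
  let ?F = "frontier \<Omega>" and ?y = "z + \<epsilon> *\<^sub>R s"
  have z: "z \<in> \<Omega>" "infdist z ?F > 2 * \<epsilon>" using assms(4) unfolding inner_layer_def by auto
  have dy: "dist z ?y = \<epsilon>" using assms(3,5) by (simp add: dist_norm)
  have nf: "ball z (2 * \<epsilon>) \<inter> ?F = {}"
  proof (rule ccontr)
    assume "ball z (2 * \<epsilon>) \<inter> ?F \<noteq> {}"
    then obtain p where p: "p \<in> ?F" "dist z p < 2 * \<epsilon>" by auto
    have "infdist z ?F \<le> dist z p" using infdist_le[OF p(1)] .
    then show False using p z by simp
  qed
  have "ball z (2 * \<epsilon>) \<subseteq> \<Omega>"
  proof (rule ccontr)
    assume "\<not> ball z (2 * \<epsilon>) \<subseteq> \<Omega>"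
    then have "ball z (2 * \<epsilon>) - \<Omega> \<noteq> {}" by blast
    moreover have "z \<in> ball z (2 * \<epsilon>)" using assms(3) by simp
    then have "ball z (2 * \<epsilon>) \<inter> \<Omega> \<noteq> {}" using z(1) by blast
    ultimately have "ball z (2 * \<epsilon>) \<inter> ?F \<noteq> {}"
      using connected_Int_frontier[OF connected_ball] by blast
    then show False using nf by blast
  qed
  moreover have "?y \<in> ball z (2 * \<epsilon>)" using dy assms(3) by simp
  ultimately have yO: "?y \<in> \<Omega>" by blast
  have "infdist z ?F \<le> infdist ?y ?F + dist z ?y" by (rule infdist_triangle)
  then have "infdist ?y ?F > mesh_size \<T>" using z(2) dy assms(2) by linarith
  then have "?y \<in> inner_layer \<Omega> (mesh_size \<T>)" using yO unfolding inner_layer_def by blast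
  then have "?y \<in> mesh_domain \<T>" using assms(1) by blast
  then show ?thesis unfolding mesh_domain_def using interior_subset by blast
qed

theorem lemma3p1:
  fixes \<Omega> :: "'a::euclidean_space set" and \<T> :: "'a set set"
    and \<epsilon> \<theta> :: real and S :: "'a set" and z :: 'a and w v :: "'a \<Rightarrow> real"
  assumes "bounded_domain_cb \<Omega>"
    and "simplicial_mesh \<T>"
    and "inner_layer \<Omega> (mesh_size \<T>) \<subseteq> mesh_domain \<T>" and "mesh_domain \<T> \<subseteq> \<Omega>"
    and "mesh_size \<T> \<le> \<epsilon>" and "\<epsilon> \<le> diameter \<Omega>"
    and "0 < \<theta>" and "\<theta> \<le> 1"
    and "theta_net \<theta> S"
    and "z \<in> nodes \<T> \<inter> inner_layer \<Omega> (2 * \<epsilon>)"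
    and "w \<in> Vh \<T>" and "v \<in> Vh \<T>"
    and "\<forall>z'\<in>ext_stencil \<T> \<epsilon> S z. (w - v) z \<ge> (w - v) z'"
  shows "Splus \<epsilon> S w z \<le> Splus \<epsilon> S v z \<and> Sminus \<epsilon> S w z \<ge> Sminus \<epsilon> S v z \<and>
         neg_disc_inf_lap \<T> \<epsilon> S w z \<ge> neg_disc_inf_lap \<T> \<epsilon> S v z"
proof -
  note mesh = assms(2)
  have finT: "finite \<T>" "\<T> \<noteq> {}" using mesh simplicial_mesh_def by blast+
  have "0 \<le> mesh_size \<T>"
  proof -
    obtain T where T: "T \<in> \<T>" using finT by blast
    have "bounded T" using T mesh compact_simplex compact_imp_bounded unfolding simplicial_mesh_def by blast
    then have "0 \<le> diameter T" by (rule diameter_ge_0)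
    also have "\<dots> \<le> mesh_size \<T>" unfolding mesh_size_def using finT T by (intro Max_ge) auto
    finally show ?thesis .
  qed
  then have e0: "0 \<le> \<epsilon>" using assms(5) by linarith
  show ?thesis
  proof (cases "\<epsilon> = 0")
    case True
    then show ?thesis by (simp add: Splus_def Sminus_def neg_disc_inf_lap_def)
  next
    case False
    then have ep: "0 < \<epsilon>" using e0 by simp
    have Sfin: "finite S" "S \<subseteq> sphere 0 1" using assms(9) unfolding theta_net_def by blast+
    let ?St = "stencil \<epsilon> S z"
    have finSt: "finite ?St" "?St \<noteq> {}" unfolding stencil_def using Sfin by auto
    have zT: "z \<in> \<Union>\<T>" using assms(10) nodes_eq VT_sub by blast
    have inmesh: "y \<in> \<Union>\<T>" if yS: "y \<in> ?St" for y
    proof -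
      consider "y = z" | s where "s \<in> S" "y = z + \<epsilon> *\<^sub>R s" using yS unfolding stencil_def by blast
      then show ?thesis
      proof cases
        case 1 then show ?thesis using zT by simp
      next
        case 2
        have ns: "norm s = 1" using 2(1) Sfin(2) by auto
        have "z \<in> inner_layer \<Omega> (2 * \<epsilon>)" using assms(10) by blast
        then show ?thesis using stencil_in_mesh[OF assms(3,5) ep _ ns] 2(2) by blast
      qed
    qed
    have key: "w y - v y \<le> w z - v z" if yS: "y \<in> ?St" for y
    proof -
      consider "y = z" | s where "s \<in> S" "y = z + \<epsilon> *\<^sub>R s" using yS unfolding stencil_def by blast
      then show ?thesis
      proof cases
        case 1 then show ?thesis by simp
      next
        case 2
        then show ?thesis using key_ineq[OF mesh assms(11,12,13) 2(1)] inmesh yS by simp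
      qed
    qed
    have zS: "z \<in> ?St" unfolding stencil_def by simp
    have P: "Max (w ` ?St) - w z \<le> Max (v ` ?St) - v z"
    proof -
      have "Max (w ` ?St) \<in> w ` ?St" using finSt by (intro Max_in) auto
      then obtain y where y: "y \<in> ?St" "Max (w ` ?St) = w y" by auto
      have "v y \<le> Max (v ` ?St)" using finSt y(1) by (intro Max_ge) auto
      then show ?thesis using key[OF y(1)] y(2) by linarith
    qed
    have M: "v z - Min (v ` ?St) \<le> w z - Min (w ` ?St)"
    proof -
      have "Min (v ` ?St) \<in> v ` ?St" using finSt by (intro Min_in) auto
      then obtain y where y: "y \<in> ?St" "Min (v ` ?St) = v y" by auto
      have "Min (w ` ?St) \<le> w y" using finSt y(1) by (intro Min_le) auto
      then show ?thesis using key[OF y(1)] y(2) by linarith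
    qed
    have c1: "Splus \<epsilon> S w z \<le> Splus \<epsilon> S v z"
      unfolding Splus_def using P ep by (simp add: divide_right_mono)
    have c2: "Sminus \<epsilon> S w z \<ge> Sminus \<epsilon> S v z"
      unfolding Sminus_def using M ep by (simp add: divide_right_mono)
    have Lw: "\<And>y. y \<in> ?St \<Longrightarrow> lagrange_interp \<T> w y = w y"
      using lagrange_eq[OF mesh assms(11)] inmesh by blast
    have Lv: "\<And>y. y \<in> ?St \<Longrightarrow> lagrange_interp \<T> v y = v y"
      using lagrange_eq[OF mesh assms(12)] inmesh by blast
    have iw: "lagrange_interp \<T> w ` ?St = w ` ?St" using Lw by (intro image_cong) auto
    have iv: "lagrange_interp \<T> v ` ?St = v ` ?St" using Lv by (intro image_cong) auto
    have "Splus \<epsilon> S (lagrange_interp \<T> w) z = Splus \<epsilon> S w z"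
      "Sminus \<epsilon> S (lagrange_interp \<T> w) z = Sminus \<epsilon> S w z"
      "Splus \<epsilon> S (lagrange_interp \<T> v) z = Splus \<epsilon> S v z"
      "Sminus \<epsilon> S (lagrange_interp \<T> v) z = Sminus \<epsilon> S v z"
      unfolding Splus_def Sminus_def using iw iv Lw[OF zS] Lv[OF zS] by simp_all
    then have "neg_disc_inf_lap \<T> \<epsilon> S w z = - (Splus \<epsilon> S w z - Sminus \<epsilon> S w z) / \<epsilon>"
      "neg_disc_inf_lap \<T> \<epsilon> S v z = - (Splus \<epsilon> S v z - Sminus \<epsilon> S v z) / \<epsilon>"
      unfolding neg_disc_inf_lap_def by simp_all
    moreover have "- (Splus \<epsilon> S v z - Sminus \<epsilon> S v z) / \<epsilon> \<le> - (Splus \<epsilon> S w z - Sminus \<epsilon> S w z) / \<epsilon>"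
      using c1 c2 ep by (intro divide_right_mono) auto
    ultimately show ?thesis using c1 c2 by simp
  qed
qed

end
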